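(* Let $\pi$ be a permutation-invariant probability density on $\mathbb{X}^n$ and $q$ a probability density on $\mathbb{X}$, and let $P_{\mathrm{SOMA}}$ and $P_{\mathrm{RAN}}$ be the Markov transition kernels of the SOMA sampler and of the random-scan independent-Metropolis-within-Gibbs sampler (Ran-IMwG). Then for $\pi$-almost all $x,x'\in\mathbb{X}^n$ with $d(x,x')=1$, $$P_{\mathrm{SOMA}}(x'\mid x)\le n\,P_{\mathrm{RAN}}(x'\mid x).$$
   Context: Permutation invariance: $\pi(x_{\sigma(1)},\dots,x_{\sigma(n)})=\pi(x)$ for all permutations $\sigma$. $[x_{-i},y]$ is $x$ with its $i$-th component replaced by $y$. Weights: $w_i(y,x)=\pi([x_{-i},y])/\big(q(y)\prod_{j\ne i}q(x_j)\big)$ ($1\le i\le n$), $w_0(y,x)=\pi(x)/\prod_j q(x_j)$, $W=\sum_{i=1}^n w_i$ (well-defined, positive). SOMA: from $x$, draw $y\sim q$, pick $I$ with probability $w_I/W$, move to $[x_{-I},y]$ with probability $\min\{1,W/(W+w_0-w_I)\}$, else stay. Ran-IMwG: from $x$, pick $I$ uniformly in $\{1,\dots,n\}$, draw $y\sim q$, move to $[x_{-I},y]$ with probability $\min\{1,\pi([x_{-I},y])q(x_I)/(\pi(x)q(y))\}$, else stay. $P(x'\mid x)$ for $x'\neq x$ denotes the (off-diagonal) transition density. $d(x,x')=\min_{\sigma\in S_n}\|x_\sigma-x'\|_0$ is the number of differing components up to permutation. *)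

theory Defs
  imports "HOL-Probability.Probability"
begin

text \<open>Points of X^n are extensional functions on the index set {..<n}
  (components indexed 0..n-1 instead of 1..n).  The base space X carries a
  reference measure M; q and pi are densities w.r.t. M and the product of M.\<close>

definition sp_n :: "nat \<Rightarrow> 'a measure \<Rightarrow> (nat \<Rightarrow> 'a) measure" where
  "sp_n n M = PiM {..<n} (\<lambda>_. M)"

definition permv :: "nat \<Rightarrow> (nat \<Rightarrow> nat) \<Rightarrow> (nat \<Rightarrow> 'a) \<Rightarrow> (nat \<Rightarrow> 'a)" where
  "permv n \<sigma> x = (\<lambda>i\<in>{..<n}. x (\<sigma> i))"

definition perm_invariant :: "nat \<Rightarrow> ((nat \<Rightarrow> 'a) \<Rightarrow> real) \<Rightarrow> bool" where
  "perm_invariant n \<pi> \<longleftrightarrow> (\<forall>x\<in>extensional {..<n}. \<forall>\<sigma>. \<sigma> permutes {..<n} \<longrightarrow> \<pi> (permv n \<sigma> x) = \<pi> x)"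

definition dist_perm :: "nat \<Rightarrow> (nat \<Rightarrow> 'a) \<Rightarrow> (nat \<Rightarrow> 'a) \<Rightarrow> nat" where
  "dist_perm n x x' = Min ((\<lambda>\<sigma>. card {i\<in>{..<n}. permv n \<sigma> x i \<noteq> x' i}) ` {\<sigma>. \<sigma> permutes {..<n}})"

text \<open>Weights.  [x_{-i},y] is x(i := y).\<close>
definition w_i :: "nat \<Rightarrow> ((nat \<Rightarrow> 'a) \<Rightarrow> real) \<Rightarrow> ('a \<Rightarrow> real) \<Rightarrow> nat \<Rightarrow> 'a \<Rightarrow> (nat \<Rightarrow> 'a) \<Rightarrow> real" where
  "w_i n \<pi> q i y x = \<pi> (x(i := y)) / (q y * (\<Prod>j\<in>{..<n} - {i}. q (x j)))"

definition w_0 :: "nat \<Rightarrow> ((nat \<Rightarrow> 'a) \<Rightarrow> real) \<Rightarrow> ('a \<Rightarrow> real) \<Rightarrow> (nat \<Rightarrow> 'a) \<Rightarrow> real" where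
  "w_0 n \<pi> q x = \<pi> x / (\<Prod>j\<in>{..<n}. q (x j))"

definition W_sum :: "nat \<Rightarrow> ((nat \<Rightarrow> 'a) \<Rightarrow> real) \<Rightarrow> ('a \<Rightarrow> real) \<Rightarrow> 'a \<Rightarrow> (nat \<Rightarrow> 'a) \<Rightarrow> real" where
  "W_sum n \<pi> q y x = (\<Sum>i\<in>{..<n}. w_i n \<pi> q i y x)"

text \<open>Off-diagonal transition densities P(x'|x), x' \<noteq> x.  Both kernels only move
  from x to states x(i := y); the density of such a move is taken w.r.t. M on
  the replaced coordinate y = x' i.  The sum ranges over the indices i at which
  x' is obtained from x by replacing component i (for x' \<noteq> x at most one i).\<close>
definition P_SOMA :: "nat \<Rightarrow> ((nat \<Rightarrow> 'a) \<Rightarrow> real) \<Rightarrow> ('a \<Rightarrow> real) \<Rightarrow> (nat \<Rightarrow> 'a) \<Rightarrow> (nat \<Rightarrow> 'a) \<Rightarrow> real" where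
  "P_SOMA n \<pi> q x' x =
     (\<Sum>i\<in>{i\<in>{..<n}. x' = x(i := x' i)}.
        let y = x' i; W = W_sum n \<pi> q y x; wi = w_i n \<pi> q i y x; w0 = w_0 n \<pi> q x
        in q y * (wi / W) * min 1 (W / (W + w0 - wi)))"

definition P_RAN :: "nat \<Rightarrow> ((nat \<Rightarrow> 'a) \<Rightarrow> real) \<Rightarrow> ('a \<Rightarrow> real) \<Rightarrow> (nat \<Rightarrow> 'a) \<Rightarrow> (nat \<Rightarrow> 'a) \<Rightarrow> real" where
  "P_RAN n \<pi> q x' x =
     (\<Sum>i\<in>{i\<in>{..<n}. x' = x(i := x' i)}.
        let y = x' i
        in (1 / real n) * q y * min 1 (\<pi> x' * q (x i) / (\<pi> x * q y)))"

end

theory Submission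
  imports Defs
begin

lemma key_ineq:
  fixes wi W w0 :: real
  assumes "wi \<ge> 0" "W \<ge> wi" "w0 > 0"
  shows "(wi / W) * min 1 (W / (W + w0 - wi)) \<le> min 1 (wi / w0)"
proof (cases "wi = 0")
  case True then show ?thesis using assms by simp
next
  case False
  hence wp: "wi > 0" using assms by simp
  hence Wp: "W > 0" using assms by simp
  have d: "W + w0 - wi \<ge> w0" using assms by simp
  have "(wi / W) * min 1 (W / (W + w0 - wi)) = min (wi / W) (wi / (W + w0 - wi))"
    using Wp d assms by (simp add: min_mult_distrib_left field_simps)
  also have "\<dots> \<le> min 1 (wi / w0)"
  proof -
    have "wi / W \<le> 1" using Wp assms by simp
    moreover have "wi / (W + w0 - wi) \<le> wi / w0"
      using d wp assms by (intro divide_left_mono) auto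
    ultimately show ?thesis by linarith
  qed
  finally show ?thesis .
qed

theorem theorem3:
  fixes M :: "'a measure" and n :: nat
    and \<pi> :: "(nat \<Rightarrow> 'a) \<Rightarrow> real" and q :: "'a \<Rightarrow> real"
  assumes q_meas: "q \<in> borel_measurable M"
    and q_nonneg: "\<And>y. y \<in> space M \<Longrightarrow> q y \<ge> 0"
    and q_prob: "(\<integral>\<^sup>+ y. ennreal (q y) \<partial>M) = 1"
    and pi_meas: "\<pi> \<in> borel_measurable (sp_n n M)"
    and pi_nonneg: "\<And>x. x \<in> space (sp_n n M) \<Longrightarrow> \<pi> x \<ge> 0"
    and pi_prob: "(\<integral>\<^sup>+ x. ennreal (\<pi> x) \<partial>sp_n n M) = 1"
    and pi_perm: "perm_invariant n \<pi>"
    and well_defined: "AE x in density (sp_n n M) (\<lambda>x. ennreal (\<pi> x)). \<forall>j<n. q (x j) > 0"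
  shows "AE x in density (sp_n n M) (\<lambda>x. ennreal (\<pi> x)).
           \<forall>x'\<in>space (sp_n n M). dist_perm n x x' = 1 \<longrightarrow>
             P_SOMA n \<pi> q x' x \<le> real n * P_RAN n \<pi> q x' x"
proof -
  have sp: "space (sp_n n M) = PiE {..<n} (\<lambda>_. space M)"
    by (simp add: sp_n_def space_PiM)
  have pm: "(\<lambda>x. ennreal (\<pi> x)) \<in> borel_measurable (sp_n n M)" using pi_meas by simp
  have A1: "AE x in density (sp_n n M) (\<lambda>x. ennreal (\<pi> x)). \<pi> x > 0"
    by (subst AE_density[OF pm]) (auto simp: ennreal_eq_0_iff)
  have A2: "AE x in density (sp_n n M) (\<lambda>x. ennreal (\<pi> x)). x \<in> space (sp_n n M)"
    using AE_space[of "density (sp_n n M) (\<lambda>x. ennreal (\<pi> x))"] by simp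
  show ?thesis
  proof (rule eventually_mono[OF eventually_conj[OF A1 eventually_conj[OF A2 well_defined]]])
    fix x assume H: "0 < \<pi> x \<and> x \<in> space (sp_n n M) \<and> (\<forall>j<n. 0 < q (x j))"
    hence px: "\<pi> x > 0" and xs: "x \<in> space (sp_n n M)" and qx: "\<And>j. j < n \<Longrightarrow> q (x j) > 0"
      by auto
    show "\<forall>x'\<in>space (sp_n n M). dist_perm n x x' = 1 \<longrightarrow>
             P_SOMA n \<pi> q x' x \<le> real n * P_RAN n \<pi> q x' x"
    proof (intro ballI impI)
      fix x' assume x's: "x' \<in> space (sp_n n M)"
      let ?S = "{i\<in>{..<n}. x' = x(i := x' i)}"
      have termle: "(let y = x' i; W = W_sum n \<pi> q y x; wi = w_i n \<pi> q i y x; w0 = w_0 n \<pi> q x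
        in q y * (wi / W) * min 1 (W / (W + w0 - wi)))
        \<le> real n * (let y = x' i
        in (1 / real n) * q y * min 1 (\<pi> x' * q (x i) / (\<pi> x * q y)))"
        if iS: "i \<in> ?S" for i
      proof -
        define y where "y = x' i"
        have i: "i < n" and x'eq: "x' = x(i := y)" using iS y_def by auto
        have ys: "y \<in> space M" using x's i by (auto simp: sp y_def)
        have qy: "q y \<ge> 0" using q_nonneg ys by simp
        have xk: "x(k := y) \<in> space (sp_n n M)" if "k < n" for k
          using xs ys that by (auto simp: sp PiE_def extensional_def)
        define Qi where "Qi = (\<Prod>j\<in>{..<n} - {i}. q (x j))"
        have Qip: "Qi > 0" unfolding Qi_def using qx by (intro prod_pos) auto
        have Qeq: "(\<Prod>j\<in>{..<n}. q (x j)) = q (x i) * Qi"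
          unfolding Qi_def using i by (subst prod.remove[of _ i]) auto
        define wi where "wi = w_i n \<pi> q i y x"
        define W where "W = W_sum n \<pi> q y x"
        define w0 where "w0 = w_0 n \<pi> q x"
        have wk: "w_i n \<pi> q k y x \<ge> 0" if "k < n" for k
          unfolding w_i_def using pi_nonneg[OF xk[OF that]] qy qx
          by (intro divide_nonneg_nonneg mult_nonneg_nonneg prod_nonneg) (auto simp: less_imp_le)
        have wi0: "wi \<ge> 0" using wk i wi_def by simp
        have Wge: "W \<ge> wi" unfolding W_def W_sum_def wi_def
          using i wk by (intro member_le_sum) auto
        have qxi: "q (x i) > 0" using qx i by simp
        have w0p: "w0 > 0" unfolding w0_def w_0_def using px Qeq Qip qxi by simp
        have n0: "real n > 0" using i by simp
        show ?thesis
        proof (cases "q y = 0")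
          case True then show ?thesis by (simp add: y_def[symmetric] Let_def)
        next
          case False
          hence qyp: "q y > 0" using qy by simp
          have ratio: "wi / w0 = \<pi> x' * q (x i) / (\<pi> x * q y)"
            unfolding wi_def w0_def w_i_def w_0_def Qeq Qi_def[symmetric] x'eq
            using qyp Qip qxi px by (simp add: field_simps)
          have "q y * (wi / W) * min 1 (W / (W + w0 - wi)) \<le> q y * min 1 (wi / w0)"
            using mult_left_mono[OF key_ineq[OF wi0 Wge w0p] qy]
            by (simp add: mult.assoc)
          also have "\<dots> = real n * ((1 / real n) * q y * min 1 (\<pi> x' * q (x i) / (\<pi> x * q y)))"
            using n0 ratio by simp
          finally show ?thesis by (simp add: y_def[symmetric] wi_def[symmetric] W_def[symmetric] w0_def[symmetric] Let_def)
        qed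
      qed
      have "P_SOMA n \<pi> q x' x \<le> (\<Sum>i\<in>?S. real n * (let y = x' i
        in (1 / real n) * q y * min 1 (\<pi> x' * q (x i) / (\<pi> x * q y))))"
        unfolding P_SOMA_def by (rule sum_mono) (rule termle)
      also have "\<dots> = real n * P_RAN n \<pi> q x' x"
        unfolding P_RAN_def by (simp add: sum_distrib_left)
      finally show "P_SOMA n \<pi> q x' x \<le> real n * P_RAN n \<pi> q x' x" .
    qed
  qed
qed

end
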